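(* Let $d\geq 3$, $k\geq 1$ and $n=kd-1$. Let $\Delta'=(s_2s_3\cdots s_n)(s_2s_3\cdots s_{n-1})\cdots(s_2s_3)(s_2)\in B_{n+1}$ and $u=[s_1,\Delta'^2]=s_1\Delta'^2s_1^{-1}\Delta'^{-2}$. Then $\rho_n(d)(u)$ is a non-trivial unipotent element of $U(h)$ lying in the kernel $U_0$ of the natural map $U(h)\to U(\overline h)$. Here $U_0$ is the group of unitary $g$ with $g(v)=v$ and $g(x)-x\in Av$ for all $x$.
   Context: $A=\mathbb{Z}[q,q^{-1}]/(\Phi_d(q))$, where $\Phi_d$ is the $d$-th cyclotomic polynomial. $\rho_n(d):B_{n+1}\to GL_n(A)$ is the reduced Burau representation reduced mod $\Phi_d(q)$. It sends the generator $s_j$ to $T_j$, where $T_j(e_j)=-qe_j$, $T_j(e_{j-1})=e_{j-1}+qe_j$, $T_j(e_{j+1})=e_{j+1}+e_j$, and $T_j(e_k)=e_k$ for $|k-j|\geq 2$, with $e_1,\dots,e_n$ the standard basis. It preserves the sesquilinear Hermitian form $h=h_n$ given by $h(e_j,e_j)=(q+1)^2/q$, $h(e_j,e_{j+1})=-(q+1)$, $h(e_{j+1},e_j)=-(1+q^{-1})$, and $h(e_j,e_k)=0$ for $|j-k|\geq 2$. For $n=kd-1$, this form is degenerate with null space $Av$, where $v=\sum_{j=1}^{n}\frac{q^j-1}{q-1}e_j$. $\overline h$ is the induced non-degenerate form on $A^n/Av$. $U(h)$ and $U(\overline h)$ are the unitary groups of these forms, and the natural map $U(h)\to U(\overline h)$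 is induced by passing to the quotient. *)

theory Defs
  imports Complex_Main "HOL-Computational_Algebra.Polynomial" "Jordan_Normal_Form.Matrix"
begin

text \<open>The ring A = Z[q,q^-1]/(Phi_d(q)) is realised as its isomorphic image Z[zeta_d] inside
  the complex numbers, via q |-> zeta_d = exp(2 pi i / d).  Under this isomorphism the
  involution q |-> q^-1 becomes complex conjugation.\<close>

definition zeta :: "nat \<Rightarrow> complex" where
  "zeta d = cis (2 * pi / real d)"

definition cyc_ring :: "nat \<Rightarrow> complex set" where
  "cyc_ring d = {poly (map_poly of_int p) (zeta d) | p :: int poly. True}"

definition A_vec :: "nat \<Rightarrow> nat \<Rightarrow> complex vec \<Rightarrow> bool" where
  "A_vec d n x \<longleftrightarrow> x \<in> carrier_vec n \<and> (\<forall>i<n. x $ i \<in> cyc_ring d)"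

definition A_mat :: "nat \<Rightarrow> nat \<Rightarrow> complex mat \<Rightarrow> bool" where
  "A_mat d n g \<longleftrightarrow> g \<in> carrier_mat n n \<and> (\<forall>i<n. \<forall>j<n. g $$ (i, j) \<in> cyc_ring d)"

text \<open>Reduced Burau matrix T_j (generator s_j, 1 <= j <= n) acting on A^n; basis vector e_i
  (1-based) is index i-1; column k holds the coordinates of T_j(e_(k+1)).\<close>

definition burau_gen :: "nat \<Rightarrow> nat \<Rightarrow> nat \<Rightarrow> complex mat" where
  "burau_gen d n j = mat n n (\<lambda>(i, k).
     let q = zeta d; i' = i + 1; k' = k + 1 in
     if k' = j then (if i' = j then - q else 0)
     else if k' + 1 = j then (if i' = k' then 1 else if i' = j then q else 0)
     else if k' = j + 1 then (if i' = k' \<or> i' = j then 1 else 0)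
     else (if i' = k' then 1 else 0))"

definition burau_gen_inv :: "nat \<Rightarrow> nat \<Rightarrow> nat \<Rightarrow> complex mat" where
  "burau_gen_inv d n j = (SOME B. B \<in> carrier_mat n n \<and> burau_gen d n j * B = 1\<^sub>m n \<and> B * burau_gen d n j = 1\<^sub>m n)"

text \<open>Braid words: (j, True) is s_j, (j, False) is s_j^-1.\<close>

type_synonym braid_word = "(nat \<times> bool) list"

definition rho :: "nat \<Rightarrow> nat \<Rightarrow> braid_word \<Rightarrow> complex mat" where
  "rho d n w = foldr (\<lambda>(j, b) M. (if b then burau_gen d n j else burau_gen_inv d n j) * M) w (1\<^sub>m n)"

definition inv_word :: "braid_word \<Rightarrow> braid_word" where
  "inv_word w = rev (map (\<lambda>(j, b). (j, \<not> b)) w)"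

definition delta' :: "nat \<Rightarrow> braid_word" where
  "delta' n = concat (map (\<lambda>m. map (\<lambda>j. (j, True)) [2..<m+1]) (rev [2..<n+1]))"

definition u_word :: "nat \<Rightarrow> braid_word" where
  "u_word n = [(1, True)] @ delta' n @ delta' n @ [(1, False)]
              @ inv_word (delta' n) @ inv_word (delta' n)"

definition h_gram :: "nat \<Rightarrow> nat \<Rightarrow> nat \<Rightarrow> complex" where
  "h_gram d j k = (let q = zeta d in
     if j = k then (q + 1)^2 / q
     else if k = j + 1 then - (q + 1)
     else if j = k + 1 then - (1 + inverse q)
     else 0)"

definition hform :: "nat \<Rightarrow> nat \<Rightarrow> complex vec \<Rightarrow> complex vec \<Rightarrow> complex" where
  "hform d n x y = (\<Sum>j<n. \<Sum>k<n. x $ j * h_gram d j k * cnj (y $ k))"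

definition null_vec :: "nat \<Rightarrow> nat \<Rightarrow> complex vec" where
  "null_vec d n = vec n (\<lambda>i. (zeta d ^ (i + 1) - 1) / (zeta d - 1))"

definition unitary_grp :: "nat \<Rightarrow> nat \<Rightarrow> complex mat set" where
  "unitary_grp d n = {g. A_mat d n g \<and>
      (\<exists>g'. A_mat d n g' \<and> g * g' = 1\<^sub>m n \<and> g' * g = 1\<^sub>m n) \<and>
      (\<forall>x y. A_vec d n x \<longrightarrow> A_vec d n y \<longrightarrow> hform d n (g *\<^sub>v x) (g *\<^sub>v y) = hform d n x y)}"

definition U0 :: "nat \<Rightarrow> nat \<Rightarrow> complex mat set" where
  "U0 d n = {g \<in> unitary_grp d n. g *\<^sub>v null_vec d n = null_vec d n \<and>
      (\<forall>x. A_vec d n x \<longrightarrow> (\<exists>a \<in> cyc_ring d. g *\<^sub>v x - x = a \<cdot>\<^sub>v null_vec d n))}"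

definition unipotent :: "nat \<Rightarrow> complex mat \<Rightarrow> bool" where
  "unipotent n g \<longleftrightarrow> (\<exists>m. (g - 1\<^sub>m n) ^\<^sub>m m = 0\<^sub>m n n)"

end

theory Submission
  imports Defs
begin

lemma zeta_pow_d: "d > 0 \<Longrightarrow> zeta d ^ d = 1"
  unfolding zeta_def DeMoivre by (simp add: cis_2pi)

lemma zeta_nz: "zeta d \<noteq> 0"
  unfolding zeta_def by simp

lemma zeta_cnj: "cnj (zeta d) = inverse (zeta d)"
  unfolding zeta_def by (simp add: cis_cnj cis_inverse)

lemma zeta_ne1: assumes "d \<ge> 3" shows "zeta d \<noteq> 1" and "zeta d \<noteq> -1"
proof -
  have t0: "0 < 2 * pi / real d" using assms by simp
  have t1: "2 * pi / real d < pi" using assms pi_gt_zero by (simp add: field_simps)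
  have c1: "cos (2 * pi / real d) < 1"
    using cos_monotone_0_pi[of 0 "2 * pi / real d"] t0 t1 by simp
  have c2: "cos (2 * pi / real d) > -1"
    using cos_monotone_0_pi[of "2 * pi / real d" pi] t0 t1 by simp
  show "zeta d \<noteq> 1"
  proof
    assume "zeta d = 1"
    hence "Re (zeta d) = 1" by simp
    thus False using c1 unfolding zeta_def by simp
  qed
  show "zeta d \<noteq> -1"
  proof
    assume "zeta d = -1"
    hence "Re (zeta d) = -1" by simp
    thus False using c2 unfolding zeta_def by simp
  qed
qed

section \<open>ring\<close>

lemma cyc_ring_iff: "z \<in> cyc_ring d \<longleftrightarrow> (\<exists>p::complex poly. (\<forall>i. coeff p i \<in> \<int>) \<and> z = poly p (zeta d))"
proof
  assume "z \<in> cyc_ring d"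
  then obtain p where "z = poly (map_poly of_int p) (zeta d)" unfolding cyc_ring_def by auto
  thus "\<exists>p::complex poly. (\<forall>i. coeff p i \<in> \<int>) \<and> z = poly p (zeta d)"
    by (intro exI[of _ "map_poly of_int p"]) (auto simp: coeff_map_poly)
next
  assume "\<exists>p::complex poly. (\<forall>i. coeff p i \<in> \<int>) \<and> z = poly p (zeta d)"
  then obtain p :: "complex poly" where p: "\<forall>i. coeff p i \<in> \<int>" "z = poly p (zeta d)" by blast
  then obtain q where "p = map_poly of_int q" using intpolyE by blast
  thus "z \<in> cyc_ring d" using p unfolding cyc_ring_def by auto
qed

lemma ring_add: "a \<in> cyc_ring d \<Longrightarrow> b \<in> cyc_ring d \<Longrightarrow> a + b \<in> cyc_ring d"
  unfolding cyc_ring_iff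
  by (metis (no_types, lifting) Ints_add coeff_add poly_add)

lemma ring_mult: "a \<in> cyc_ring d \<Longrightarrow> b \<in> cyc_ring d \<Longrightarrow> a * b \<in> cyc_ring d"
  unfolding cyc_ring_iff
proof (elim exE conjE)
  fix p q assume p: "\<forall>i. coeff p i \<in> \<int>" "a = poly p (zeta d)" and q: "\<forall>i. coeff q i \<in> \<int>" "b = poly q (zeta d)"
  have "\<forall>i. coeff (p * q) i \<in> \<int>" using p q by (auto simp: coeff_mult intro!: Ints_sum Ints_mult)
  thus "\<exists>r::complex poly. (\<forall>i. coeff r i \<in> \<int>) \<and> a * b = poly r (zeta d)"
    using p q by (intro exI[of _ "p * q"]) auto
qed

lemma ring_int: "of_int c \<in> cyc_ring d"
  unfolding cyc_ring_iff by (intro exI[of _ "[:of_int c:]"]) (auto simp: coeff_pCons split: nat.splits)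

lemma ring_0: "0 \<in> cyc_ring d" using ring_int[of 0] by simp
lemma ring_1: "1 \<in> cyc_ring d" using ring_int[of 1] by simp
lemma ring_neg1: "-1 \<in> cyc_ring d" using ring_int[of "-1"] by simp

lemma ring_zeta: "zeta d \<in> cyc_ring d"
  unfolding cyc_ring_iff by (intro exI[of _ "[:0, 1:]"]) (auto simp: coeff_pCons split: nat.splits)

lemma ring_neg: "a \<in> cyc_ring d \<Longrightarrow> - a \<in> cyc_ring d"
  using ring_mult[OF ring_neg1] by fastforce

lemma ring_diff: "a \<in> cyc_ring d \<Longrightarrow> b \<in> cyc_ring d \<Longrightarrow> a - b \<in> cyc_ring d"
  using ring_add[OF _ ring_neg] by (metis diff_conv_add_uminus)

lemma ring_pow: "a \<in> cyc_ring d \<Longrightarrow> a ^ m \<in> cyc_ring d"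
  by (induction m) (auto intro: ring_1 ring_mult)

lemma ring_inv_zeta: "d > 0 \<Longrightarrow> inverse (zeta d) \<in> cyc_ring d"
proof -
  assume "d > 0"
  hence "inverse (zeta d) = zeta d ^ (d - 1)"
    using zeta_pow_d[of d] zeta_nz[of d]
    by (metis Suc_diff_1 mult.commute nonzero_inverse_eq_divide nonzero_mult_div_cancel_left power_Suc divide_self_if)
  thus ?thesis using ring_pow[OF ring_zeta] by simp
qed


lemma mat_eq_action:
  fixes A B :: "complex mat"
  assumes "A \<in> carrier_mat n n" "B \<in> carrier_mat n n"
    and "\<And>x. x \<in> carrier_vec n \<Longrightarrow> A *\<^sub>v x = B *\<^sub>v x"
  shows "A = B"
proof (rule eq_matI)
  fix i j assume "i < dim_row B" "j < dim_col B"
  hence ij: "i < n" "j < n" using assms by auto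
  have "A $$ (i, j) = (A *\<^sub>v unit_vec n j) $ i" using ij assms(1) by auto
  also have "\<dots> = (B *\<^sub>v unit_vec n j) $ i" using assms(3)[of "unit_vec n j"] by simp
  also have "\<dots> = B $$ (i, j)" using ij assms(2) by auto
  finally show "A $$ (i, j) = B $$ (i, j)" .
qed (use assms in auto)

definition rowmat :: "nat \<Rightarrow> nat \<Rightarrow> (nat \<Rightarrow> complex) \<Rightarrow> complex mat" where
  "rowmat n p c = mat n n (\<lambda>(i,k). if i = p then c k else if i = k then 1 else 0)"

lemma rowmat_carrier[simp]: "rowmat n p c \<in> carrier_mat n n"
  unfolding rowmat_def by simp

lemma rowmat_mult:
  assumes x: "x \<in> carrier_vec n"
  shows "rowmat n p c *\<^sub>v x = vec n (\<lambda>i. if i = p then (\<Sum>k<n. c k * x $ k) else x $ i)"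
proof (rule eq_vecI)
  fix i assume "i < dim_vec (vec n (\<lambda>i. if i = p then (\<Sum>k<n. c k * x $ k) else x $ i))"
  hence i: "i < n" by simp
  have "(rowmat n p c *\<^sub>v x) $ i = (\<Sum>k\<in>{0..<n}. (if i = p then c k else if i = k then 1 else 0) * x $ k)"
    using i x unfolding rowmat_def by (simp add: scalar_prod_def)
  also have "\<dots> = (if i = p then (\<Sum>k<n. c k * x $ k) else x $ i)"
  proof (cases "i = p")
    case True thus ?thesis by (simp add: lessThan_atLeast0)
  next
    case False
    hence "(\<Sum>k\<in>{0..<n}. (if i = p then c k else if i = k then 1 else 0) * x $ k)
       = (\<Sum>k\<in>{0..<n}. if k = i then x $ k else 0)" by (intro sum.cong) auto
    also have "\<dots> = x $ i" using i by simp
    finally show ?thesis using False by simp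
  qed
  finally show "(rowmat n p c *\<^sub>v x) $ i = vec n (\<lambda>i. if i = p then (\<Sum>k<n. c k * x $ k) else x $ i) $ i"
    using i by simp
qed (simp add: rowmat_def)

lemma sum3:
  fixes x :: "nat \<Rightarrow> complex"
  assumes p: "p < n"
  shows "(\<Sum>k<n. (if k + 1 = p then a else if k = p then b else if k = p + 1 then c else 0) * x k)
     = (if 1 \<le> p then a * x (p - 1) else 0) + b * x p + (if p + 1 < n then c * x (p + 1) else 0)"
proof -
  have "(\<Sum>k<n. (if k + 1 = p then a else if k = p then b else if k = p + 1 then c else 0) * x k)
      = (\<Sum>k<n. (if k = p - 1 \<and> 1 \<le> p then a * x k else 0) + (if k = p then b * x k else 0)
            + (if k = p + 1 then c * x k else 0))"
    by (intro sum.cong) auto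
  also have "\<dots> = (\<Sum>k<n. if k = p - 1 \<and> 1 \<le> p then a * x k else 0) + (\<Sum>k<n. if k = p then b * x k else 0)
            + (\<Sum>k<n. if k = p + 1 then c * x k else 0)"
    by (simp add: sum.distrib)
  also have "(\<Sum>k<n. if k = p - 1 \<and> 1 \<le> p then a * x k else 0) = (if 1 \<le> p then a * x (p - 1) else 0)"
    using p by (cases "1 \<le> p") auto
  also have "(\<Sum>k<n. if k = p then b * x k else 0) = b * x p" using p by simp
  also have "(\<Sum>k<n. if k = p + 1 then c * x k else 0) = (if p + 1 < n then c * x (p + 1) else 0)"
    by simp
  finally show ?thesis .
qed

definition tc :: "complex \<Rightarrow> nat \<Rightarrow> nat \<Rightarrow> complex" where
  "tc q p k = (if k + 1 = p then q else if k = p then - q else if k = p + 1 then 1 else 0)"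
definition tic :: "complex \<Rightarrow> nat \<Rightarrow> nat \<Rightarrow> complex" where
  "tic q p k = (if k + 1 = p then 1 else if k = p then - 1 / q else if k = p + 1 then 1 / q else 0)"

definition Tv :: "complex \<Rightarrow> nat \<Rightarrow> nat \<Rightarrow> complex vec \<Rightarrow> complex vec" where
  "Tv q n p x = vec n (\<lambda>i. if i = p then (if 1 \<le> p then q * x $ (p - 1) else 0) + (- q) * x $ p
      + (if p + 1 < n then 1 * x $ (p + 1) else 0) else x $ i)"
definition Tiv :: "complex \<Rightarrow> nat \<Rightarrow> nat \<Rightarrow> complex vec \<Rightarrow> complex vec" where
  "Tiv q n p x = vec n (\<lambda>i. if i = p then (if 1 \<le> p then 1 * x $ (p - 1) else 0) + (- 1 / q) * x $ p
      + (if p + 1 < n then 1 / q * x $ (p + 1) else 0) else x $ i)"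

lemma burau_rowmat: "burau_gen d n (Suc p) = rowmat n p (tc (zeta d) p)"
  unfolding burau_gen_def rowmat_def tc_def Let_def
  by (intro eq_matI) auto

lemma sum_tc: "p < n \<Longrightarrow> (\<Sum>k<n. tc q p k * x $ k) = (if 1 \<le> p then q * x $ (p - 1) else 0) + (- q) * x $ p
      + (if p + 1 < n then 1 * x $ (p + 1) else 0)"
  unfolding tc_def by (rule sum3[where x = "\<lambda>k. x $ k"])

lemma sum_tic: "p < n \<Longrightarrow> (\<Sum>k<n. tic q p k * x $ k) = (if 1 \<le> p then 1 * x $ (p - 1) else 0) + (- 1 / q) * x $ p
      + (if p + 1 < n then 1 / q * x $ (p + 1) else 0)"
  unfolding tic_def by (rule sum3[where x = "\<lambda>k. x $ k"])

lemma rowmat_tc: "p < n \<Longrightarrow> x \<in> carrier_vec n \<Longrightarrow> rowmat n p (tc q p) *\<^sub>v x = Tv q n p x"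
  unfolding Tv_def by (simp only: rowmat_mult sum_tc)

lemma rowmat_tic: "p < n \<Longrightarrow> x \<in> carrier_vec n \<Longrightarrow> rowmat n p (tic q p) *\<^sub>v x = Tiv q n p x"
  unfolding Tiv_def by (simp only: rowmat_mult sum_tic)

lemma Tv_carrier[simp]: "Tv q n p x \<in> carrier_vec n" unfolding Tv_def by simp
lemma Tiv_carrier[simp]: "Tiv q n p x \<in> carrier_vec n" unfolding Tiv_def by simp

lemma Tv_Tiv: "q \<noteq> 0 \<Longrightarrow> p < n \<Longrightarrow> x \<in> carrier_vec n \<Longrightarrow> Tv q n p (Tiv q n p x) = x"
  unfolding Tv_def Tiv_def by (intro eq_vecI) (auto simp: field_simps)

lemma Tiv_Tv: "q \<noteq> 0 \<Longrightarrow> p < n \<Longrightarrow> x \<in> carrier_vec n \<Longrightarrow> Tiv q n p (Tv q n p x) = x"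
  unfolding Tv_def Tiv_def by (intro eq_vecI) (auto simp: field_simps)

lemma rowmat_inv1:
  assumes p: "p < n" and q: "q \<noteq> 0"
  shows "rowmat n p (tc q p) * rowmat n p (tic q p) = 1\<^sub>m n"
proof (rule mat_eq_action[of _ n])
  fix x :: "complex vec" assume x: "x \<in> carrier_vec n"
  have "(rowmat n p (tc q p) * rowmat n p (tic q p)) *\<^sub>v x = rowmat n p (tc q p) *\<^sub>v (rowmat n p (tic q p) *\<^sub>v x)"
    by (rule assoc_mult_mat_vec[OF rowmat_carrier rowmat_carrier x])
  thus "(rowmat n p (tc q p) * rowmat n p (tic q p)) *\<^sub>v x = 1\<^sub>m n *\<^sub>v x"
    using x p q by (simp add: rowmat_tc rowmat_tic Tv_Tiv)
qed (auto intro: mult_carrier_mat[of _ n n _ n])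

lemma rowmat_inv2:
  assumes p: "p < n" and q: "q \<noteq> 0"
  shows "rowmat n p (tic q p) * rowmat n p (tc q p) = 1\<^sub>m n"
proof (rule mat_eq_action[of _ n])
  fix x :: "complex vec" assume x: "x \<in> carrier_vec n"
  have "(rowmat n p (tic q p) * rowmat n p (tc q p)) *\<^sub>v x = rowmat n p (tic q p) *\<^sub>v (rowmat n p (tc q p) *\<^sub>v x)"
    by (rule assoc_mult_mat_vec[OF rowmat_carrier rowmat_carrier x])
  thus "(rowmat n p (tic q p) * rowmat n p (tc q p)) *\<^sub>v x = 1\<^sub>m n *\<^sub>v x"
    using x p q by (simp add: rowmat_tc rowmat_tic Tiv_Tv)
qed (auto intro: mult_carrier_mat[of _ n n _ n])

lemma burau_inv_eq:
  assumes p: "p < n"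
  shows "burau_gen_inv d n (Suc p) = rowmat n p (tic (zeta d) p)"
proof -
  let ?G = "burau_gen d n (Suc p)" and ?H = "rowmat n p (tic (zeta d) p)"
  have G: "?G \<in> carrier_mat n n" by (simp add: burau_rowmat)
  have GH: "?G * ?H = 1\<^sub>m n" unfolding burau_rowmat by (rule rowmat_inv1[OF p zeta_nz])
  have HG: "?H * ?G = 1\<^sub>m n" unfolding burau_rowmat by (rule rowmat_inv2[OF p zeta_nz])
  have ex: "\<exists>B. B \<in> carrier_mat n n \<and> ?G * B = 1\<^sub>m n \<and> B * ?G = 1\<^sub>m n"
    using GH HG by (intro exI[of _ ?H]) auto
  define B where "B = burau_gen_inv d n (Suc p)"
  have B0: "B \<in> carrier_mat n n \<and> ?G * B = 1\<^sub>m n \<and> B * ?G = 1\<^sub>m n"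
    unfolding B_def burau_gen_inv_def by (rule someI_ex[OF ex])
  have B: "B \<in> carrier_mat n n" "?G * B = 1\<^sub>m n" "B * ?G = 1\<^sub>m n" using B0 by blast+
  have "B = B * 1\<^sub>m n" using right_mult_one_mat[OF B(1)] by (rule sym)
  also have "\<dots> = B * (?G * ?H)" by (simp only: GH)
  also have "\<dots> = (B * ?G) * ?H" by (rule assoc_mult_mat[OF B(1) G rowmat_carrier, symmetric])
  also have "\<dots> = 1\<^sub>m n * ?H" by (simp only: B(3))
  also have "\<dots> = ?H" by (rule left_mult_one_mat[OF rowmat_carrier])
  finally show ?thesis unfolding B_def .
qed

definition valid :: "nat \<Rightarrow> braid_word \<Rightarrow> bool" where
  "valid n w \<longleftrightarrow> (\<forall>(j, b) \<in> set w. 1 \<le> j \<and> j \<le> n)"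

definition gmat :: "nat \<Rightarrow> nat \<Rightarrow> nat \<times> bool \<Rightarrow> complex mat" where
  "gmat d n a = (if snd a then burau_gen d n (fst a) else burau_gen_inv d n (fst a))"

lemma rho_Nil[simp]: "rho d n [] = 1\<^sub>m n" by (simp add: rho_def)
lemma rho_Cons: "rho d n (a # w) = gmat d n a * rho d n w"
  by (cases a) (simp add: rho_def gmat_def)

lemma gmat_True: "p < n \<Longrightarrow> gmat d n (Suc p, True) = rowmat n p (tc (zeta d) p)"
  by (simp add: gmat_def burau_rowmat)
lemma gmat_False: "p < n \<Longrightarrow> gmat d n (Suc p, False) = rowmat n p (tic (zeta d) p)"
  by (simp add: gmat_def burau_inv_eq)

lemma gmat_carrier: "1 \<le> j \<Longrightarrow> j \<le> n \<Longrightarrow> gmat d n (j, b) \<in> carrier_mat n n"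
proof -
  assume "1 \<le> j" "j \<le> n"
  then obtain p where "j = Suc p" "p < n" by (cases j) auto
  thus ?thesis by (cases b) (simp_all add: gmat_True gmat_False)
qed

lemma gmat_inv: "1 \<le> j \<Longrightarrow> j \<le> n \<Longrightarrow> gmat d n (j, \<not> b) * gmat d n (j, b) = 1\<^sub>m n"
proof -
  assume "1 \<le> j" "j \<le> n"
  then obtain p where jp: "j = Suc p" "p < n" by (cases j) auto
  thus ?thesis by (cases b) (simp_all add: gmat_True gmat_False rowmat_inv1 rowmat_inv2 zeta_nz)
qed

lemma gmat_act: "p < n \<Longrightarrow> x \<in> carrier_vec n \<Longrightarrow> gmat d n (Suc p, True) *\<^sub>v x = Tv (zeta d) n p x"
  by (simp add: gmat_True rowmat_tc)
lemma gmat_act_inv: "p < n \<Longrightarrow> x \<in> carrier_vec n \<Longrightarrow> gmat d n (Suc p, False) *\<^sub>v x = Tiv (zeta d) n p x"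
  by (simp add: gmat_False rowmat_tic)

lemma rho_carrier: "valid n w \<Longrightarrow> rho d n w \<in> carrier_mat n n"
  by (induction w) (auto simp: rho_Cons valid_def intro!: mult_carrier_mat[of _ n n _ n] gmat_carrier)

lemma rho_append: "valid n w1 \<Longrightarrow> valid n w2 \<Longrightarrow> rho d n (w1 @ w2) = rho d n w1 * rho d n w2"
proof (induction w1)
  case Nil thus ?case using rho_carrier[of n w2 d] by simp
next
  case (Cons a w1)
  obtain j b where a: "a = (j, b)" by (cases a)
  have v: "valid n w1" "1 \<le> j" "j \<le> n" using Cons.prems a by (auto simp: valid_def)
  have "rho d n ((a # w1) @ w2) = gmat d n a * (rho d n w1 * rho d n w2)"
    using Cons v by (simp add: rho_Cons)
  also have "\<dots> = (gmat d n a * rho d n w1) * rho d n w2"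
    unfolding a by (rule assoc_mult_mat[OF gmat_carrier[OF v(2,3)] rho_carrier[OF v(1)] rho_carrier[OF Cons.prems(2)], symmetric])
  finally show ?case by (simp add: rho_Cons)
qed

lemma valid_append[simp]: "valid n (w1 @ w2) \<longleftrightarrow> valid n w1 \<and> valid n w2"
  by (auto simp: valid_def)
lemma valid_inv_word[simp]: "valid n (inv_word w) \<longleftrightarrow> valid n w"
  by (auto simp: valid_def inv_word_def)

lemma rho_inv_word: "valid n w \<Longrightarrow> rho d n (inv_word w) * rho d n w = 1\<^sub>m n"
proof (induction w)
  case Nil thus ?case by (simp add: inv_word_def)
next
  case (Cons a w)
  obtain j b where a: "a = (j, b)" by (cases a)
  have v: "valid n w" "1 \<le> j" "j \<le> n" using Cons.prems a by (auto simp: valid_def)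
  have iw: "inv_word (a # w) = inv_word w @ [(j, \<not> b)]" by (simp add: inv_word_def a)
  have v2: "valid n [(j, \<not> b)]" using v by (simp add: valid_def)
  have R: "rho d n [(j, \<not> b)] = gmat d n (j, \<not> b)"
    using right_mult_one_mat[OF gmat_carrier[OF v(2,3), of d "\<not> b"]] by (simp add: rho_Cons)
  let ?I = "rho d n (inv_word w)" and ?R = "rho d n w" and ?A = "gmat d n (j, \<not> b)" and ?B = "gmat d n (j, b)"
  have c: "?I \<in> carrier_mat n n" "?R \<in> carrier_mat n n" "?A \<in> carrier_mat n n" "?B \<in> carrier_mat n n"
    using rho_carrier v gmat_carrier by auto
  have "rho d n (inv_word (a # w)) * rho d n (a # w) = (?I * ?A) * (?B * ?R)"
    using iw rho_append[of n "inv_word w" "[(j, \<not> b)]" d] v v2 R by (simp add: rho_Cons a)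
  also have "\<dots> = ?I * (?A * (?B * ?R))"
    by (rule assoc_mult_mat[OF c(1) c(3) mult_carrier_mat[OF c(4) c(2)]])
  also have "\<dots> = ?I * ((?A * ?B) * ?R)"
    by (simp only: assoc_mult_mat[OF c(3) c(4) c(2), symmetric])
  also have "\<dots> = ?I * ?R" by (simp only: gmat_inv[OF v(2,3)] left_mult_one_mat[OF c(2)])
  also have "\<dots> = 1\<^sub>m n" by (rule Cons.IH[OF v(1)])
  finally show ?case .
qed

lemma rho_act_append: "valid n w1 \<Longrightarrow> valid n w2 \<Longrightarrow> x \<in> carrier_vec n \<Longrightarrow>
   rho d n (w1 @ w2) *\<^sub>v x = rho d n w1 *\<^sub>v (rho d n w2 *\<^sub>v x)"
  by (simp only: rho_append assoc_mult_mat_vec[OF rho_carrier rho_carrier])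

lemma rho_act_carrier: "valid n w \<Longrightarrow> x \<in> carrier_vec n \<Longrightarrow> rho d n w *\<^sub>v x \<in> carrier_vec n"
  by (rule mult_mat_vec_carrier[OF rho_carrier])


definition cword :: "nat \<Rightarrow> braid_word" where
  "cword m = map (\<lambda>j. (j, True)) [2..<m+1]"

definition Cv :: "complex \<Rightarrow> nat \<Rightarrow> nat \<Rightarrow> complex vec \<Rightarrow> complex vec" where
  "Cv q n m x = vec n (\<lambda>i. if 1 \<le> i \<and> i < m then q * x $ (i - 1) - q * x $ (m - 1) + (if m < n then x $ m else 0) else x $ i)"

definition Dv :: "complex \<Rightarrow> nat \<Rightarrow> nat \<Rightarrow> complex vec \<Rightarrow> complex vec" where
  "Dv q n m x = vec n (\<lambda>i. if 1 \<le> i \<and> i < m then q ^ i * (x $ 0 - x $ (m - i)) + (if m < n then x $ m else 0) else x $ i)"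

lemma Cv_carrier[simp]: "Cv q n m x \<in> carrier_vec n" by (simp add: Cv_def)
lemma Dv_carrier[simp]: "Dv q n m x \<in> carrier_vec n" by (simp add: Dv_def)

lemma Cv_1: "x \<in> carrier_vec n \<Longrightarrow> Cv q n 1 x = x"
  by (intro eq_vecI) (auto simp: Cv_def)

lemma Dv_1: "x \<in> carrier_vec n \<Longrightarrow> Dv q n 1 x = x"
  by (intro eq_vecI) (auto simp: Dv_def)

lemma Cv_step:
  assumes x: "x \<in> carrier_vec n" and m: "1 \<le> m" "m < n"
  shows "Cv q n m (Tv q n m x) = Cv q n (Suc m) x"
proof (rule eq_vecI)
  fix i assume "i < dim_vec (Cv q n (Suc m) x)"
  hence i: "i < n" by (simp add: Cv_def)
  consider "i = 0" | "1 \<le> i" "i < m" | "i = m" | "m < i" by linarith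
  thus "Cv q n m (Tv q n m x) $ i = Cv q n (Suc m) x $ i"
  proof cases
    case 1 thus ?thesis using i m by (simp add: Cv_def Tv_def)
  next
    case 2
    have "Cv q n m (Tv q n m x) $ i = q * Tv q n m x $ (i - 1) - q * Tv q n m x $ (m - 1) + Tv q n m x $ m"
      using 2 i m by (simp add: Cv_def)
    also have "\<dots> = q * x $ (i - 1) - q * x $ (m - 1) + ((q * x $ (m - 1)) + (- q) * x $ m + (if m + 1 < n then 1 * x $ (m + 1) else 0))"
    proof -
      have a: "m - 1 \<noteq> m" "i - 1 \<noteq> m" "m - 1 < n" "i - 1 < n" using 2 i m by auto
      show ?thesis using a 2 i m by (simp add: Tv_def)
    qed
    also have "\<dots> = Cv q n (Suc m) x $ i"
      using 2 i m by (simp add: Cv_def algebra_simps)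
    finally show ?thesis .
  next
    case 3 thus ?thesis using i m by (simp add: Cv_def Tv_def algebra_simps)
  next
    case 4 thus ?thesis using i m by (simp add: Cv_def Tv_def)
  qed
qed (simp add: Cv_def)

lemma Dv_step:
  assumes x: "x \<in> carrier_vec n" and m: "1 \<le> m" "Suc m \<le> n"
  shows "Cv q n (Suc m) (Dv q n m x) = Dv q n (Suc m) x"
proof (rule eq_vecI)
  fix i assume "i < dim_vec (Dv q n (Suc m) x)"
  hence i: "i < n" by (simp add: Dv_def)
  let ?y = "Dv q n m x"
  have ym: "?y $ m = x $ m" using m by (simp add: Dv_def)
  have ym1: "m + 1 < n \<Longrightarrow> ?y $ (m + 1) = x $ (m + 1)" by (simp add: Dv_def)
  have y0: "?y $ 0 = x $ 0" using m by (simp add: Dv_def)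
  consider "i = 0" | "i = 1" | "2 \<le> i" "i \<le> m" | "m < i" by linarith
  thus "Cv q n (Suc m) ?y $ i = Dv q n (Suc m) x $ i"
  proof cases
    case 1 thus ?thesis using i m by (simp add: Cv_def Dv_def)
  next
    case 2
    have "Cv q n (Suc m) ?y $ i = q * ?y $ 0 - q * ?y $ m + (if m + 1 < n then ?y $ (m + 1) else 0)"
      using 2 i m by (simp add: Cv_def)
    also have "\<dots> = q * x $ 0 - q * x $ m + (if m + 1 < n then x $ (m + 1) else 0)"
      using ym ym1 y0 by simp
    also have "\<dots> = Dv q n (Suc m) x $ i"
      using 2 i m by (simp add: Dv_def algebra_simps)
    finally show ?thesis .
  next
    case 3
    have yi: "?y $ (i - 1) = q ^ (i - 1) * (x $ 0 - x $ (m - (i - 1))) + x $ m"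
    proof -
      have a: "1 \<le> i - 1" "i - 1 < m" "i - 1 < n" "m < n" using 3 m by auto
      show ?thesis using a by (simp add: Dv_def)
    qed
    have e1: "m - (i - 1) = Suc m - i" using 3 by simp
    have e2: "q * q ^ (i - 1) = q ^ i" using 3 by (simp add: power_eq_if)
    have "Cv q n (Suc m) ?y $ i = q * ?y $ (i - 1) - q * ?y $ m + (if m + 1 < n then ?y $ (m + 1) else 0)"
      using 3 i m by (simp add: Cv_def)
    also have "\<dots> = q * (q ^ (i - 1) * (x $ 0 - x $ (Suc m - i)) + x $ m) - q * x $ m + (if m + 1 < n then x $ (m + 1) else 0)"
      using ym ym1 yi e1 by simp
    also have "\<dots> = (q * q ^ (i - 1)) * (x $ 0 - x $ (Suc m - i)) + (if m + 1 < n then x $ (m + 1) else 0)"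
      by (simp add: algebra_simps)
    also have "\<dots> = Dv q n (Suc m) x $ i"
      unfolding e2 using 3 i m by (simp add: Dv_def)
    finally show ?thesis .
  next
    case 4 thus ?thesis using i m by (simp add: Cv_def Dv_def)
  qed
qed (simp add: Dv_def)

lemma valid_cword: "m \<le> n \<Longrightarrow> valid n (cword m)"
  by (auto simp: valid_def cword_def)

lemma delta'_Suc: "1 \<le> m \<Longrightarrow> delta' (Suc m) = cword (Suc m) @ delta' m"
  by (simp add: delta'_def cword_def)

lemma valid_delta': "m \<le> n \<Longrightarrow> valid n (delta' m)"
  by (auto simp: valid_def delta'_def)

lemma rho_cword: "1 \<le> m \<Longrightarrow> m \<le> n \<Longrightarrow> x \<in> carrier_vec n \<Longrightarrow> rho d n (cword m) *\<^sub>v x = Cv (zeta d) n m x"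
proof (induction m arbitrary: x rule: nat_induct_at_least)
  case base thus ?case using Cv_1[of x n "zeta d"] by (simp add: cword_def)
next
  case (Suc m)
  have w: "cword (Suc m) = cword m @ [(Suc m, True)]" using Suc.hyps by (simp add: cword_def)
  have v1: "valid n [(Suc m, True)]" using Suc by (simp add: valid_def)
  have "rho d n (cword (Suc m)) *\<^sub>v x = rho d n (cword m) *\<^sub>v (rho d n [(Suc m, True)] *\<^sub>v x)"
    unfolding w by (rule rho_act_append[OF valid_cword v1 Suc.prems(2)]) (use Suc in simp)
  also have "rho d n [(Suc m, True)] *\<^sub>v x = Tv (zeta d) n m x"
    using Suc gmat_carrier[of "Suc m" n d True]
    by (simp add: rho_Cons right_mult_one_mat gmat_act)
  also have "rho d n (cword m) *\<^sub>v Tv (zeta d) n m x = Cv (zeta d) n m (Tv (zeta d) n m x)"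
    using Suc.IH[of "Tv (zeta d) n m x"] Suc.prems by simp
  also have "\<dots> = Cv (zeta d) n (Suc m) x" using Suc by (simp add: Cv_step)
  finally show ?case .
qed

lemma rho_delta': "1 \<le> m \<Longrightarrow> m \<le> n \<Longrightarrow> x \<in> carrier_vec n \<Longrightarrow> rho d n (delta' m) *\<^sub>v x = Dv (zeta d) n m x"
proof (induction m rule: nat_induct_at_least)
  case base thus ?case using Dv_1[of x n "zeta d"] by (simp add: delta'_def)
next
  case (Suc m)
  have "rho d n (delta' (Suc m)) *\<^sub>v x = rho d n (cword (Suc m)) *\<^sub>v (rho d n (delta' m) *\<^sub>v x)"
    unfolding delta'_Suc[OF Suc.hyps] by (rule rho_act_append[OF valid_cword valid_delta' Suc.prems(2)]) (use Suc in simp_all)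
  also have "\<dots> = Cv (zeta d) n (Suc m) (Dv (zeta d) n m x)"
    using Suc by (simp add: rho_cword)
  also have "\<dots> = Dv (zeta d) n (Suc m) x" using Suc by (simp add: Dv_step)
  finally show ?case .
qed


section \<open>the commutator\<close>

definition Div :: "complex \<Rightarrow> nat \<Rightarrow> complex vec \<Rightarrow> complex vec" where
  "Div q n y = vec n (\<lambda>i. if 1 \<le> i then y $ 0 - q ^ (i + 1) * y $ (n - i) else y $ 0)"

definition Uv :: "complex \<Rightarrow> nat \<Rightarrow> complex vec \<Rightarrow> complex vec" where
  "Uv q n y = vec n (\<lambda>i. y $ i + (q ^ i - inverse q) * (y $ 1 - (1 + q) * y $ 0))"

lemma Div_carrier[simp]: "Div q n y \<in> carrier_vec n" by (simp add: Div_def)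
lemma Uv_carrier[simp]: "Uv q n y \<in> carrier_vec n" by (simp add: Uv_def)

lemma pow_split0: "i \<le> n \<Longrightarrow> (q::complex) ^ i * q ^ (n - i) = q ^ n"
  by (metis le_add_diff_inverse power_add)

lemma pow_split: "q ^ (n + 1) = (1::complex) \<Longrightarrow> i < n \<Longrightarrow> q ^ i * q ^ (n - i + 1) = q ^ (n + 1)"
  using pow_split0[of i "n + 1" q] by (simp add: Suc_diff_le)

lemma Dv_Div:
  assumes q1: "q ^ (n + 1) = 1" and y: "y \<in> carrier_vec n"
  shows "Dv q n n (Div q n y) = y"
proof (rule eq_vecI)
  fix i assume "i < dim_vec y"
  hence i: "i < n" using y by simp
  show "Dv q n n (Div q n y) $ i = y $ i"
  proof (cases "1 \<le> i")
    case True
    have a: "n - i < n" "1 \<le> n - i" "n - (n - i) = i" using True i by auto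
    have "Dv q n n (Div q n y) $ i = q ^ i * (y $ 0 - (y $ 0 - q ^ (n - i + 1) * y $ i))"
      using True i a by (simp add: Dv_def Div_def)
    also have "\<dots> = (q ^ i * q ^ (n - i + 1)) * y $ i" by (simp add: algebra_simps)
    also have "\<dots> = y $ i" by (simp only: pow_split[OF q1 i] q1 mult_1)
    finally show ?thesis .
  next
    case False hence "i = 0" by simp
    thus ?thesis using i by (simp add: Dv_def Div_def)
  qed
qed (use y in \<open>simp add: Dv_def\<close>)

lemma final_comp:
  assumes q0: "q \<noteq> 0" and q1: "q ^ (n + 1) = 1" and n: "n \<ge> 2" and y: "y \<in> carrier_vec n"
  shows "Tv q n 0 (Dv q n n (Dv q n n (Tiv q n 0 (Div q n (Div q n y))))) = Uv q n y"
proof -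
  have qn: "q ^ n = inverse q" using q1 q0 by (simp add: field_simps)
  define W where "W = Div q n (Div q n y)"
  have W0: "W $ 0 = y $ 0" using n by (simp add: W_def Div_def)
  have Wi: "W $ i = y $ 0 * (1 - q ^ (i + 1)) + q * y $ i" if "1 \<le> i" "i < n" for i
  proof -
    have a: "n - i < n" "1 \<le> n - i" "n - (n - i) = i" using that by auto
    have "W $ i = y $ 0 - q ^ (i + 1) * (y $ 0 - q ^ (n - i + 1) * y $ i)"
      using that a by (simp add: W_def Div_def)
    also have "\<dots> = y $ 0 * (1 - q ^ (i + 1)) + (q ^ (i + 1) * q ^ (n - i + 1)) * y $ i"
      by (simp add: algebra_simps)
    also have "q ^ (i + 1) * q ^ (n - i + 1) = q"
    proof -
      have "q ^ (i + 1) * q ^ (n - i + 1) = q * (q ^ i * q ^ (n - i + 1))" by simp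
      also have "\<dots> = q" by (simp only: pow_split[OF q1 that(2)] q1 mult_1_right)
      finally show ?thesis .
    qed
    finally show ?thesis by simp
  qed
  define t where "t = Tiv q n 0 W"
  have t0: "t $ 0 = y $ 1 - q * y $ 0"
  proof -
    have "t $ 0 = (- 1 / q) * W $ 0 + 1 / q * W $ 1" using n by (simp add: t_def Tiv_def)
    also have "\<dots> = (- 1 / q) * y $ 0 + 1 / q * (y $ 0 * (1 - q * q) + q * y $ 1)"
      using W0 Wi[of 1] n by simp
    also have "\<dots> = y $ 1 - q * y $ 0" using q0 by (simp add: field_simps)
    finally show ?thesis .
  qed
  have ti: "t $ i = W $ i" if "1 \<le> i" "i < n" for i using that by (simp add: t_def Tiv_def)
  define z where "z = Dv q n n (Dv q n n t)"
  have z0: "z $ 0 = t $ 0" using n by (simp add: z_def Dv_def)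
  have zi: "z $ i = q ^ i * t $ 0 - inverse q * t $ 0 + inverse q * t $ i" if "1 \<le> i" "i < n" for i
  proof -
    have a: "n - i < n" "1 \<le> n - i" "n - (n - i) = i" using that by auto
    have "z $ i = q ^ i * (t $ 0 - q ^ (n - i) * (t $ 0 - t $ i))"
      using that a by (simp add: z_def Dv_def)
    also have "\<dots> = q ^ i * t $ 0 - (q ^ i * q ^ (n - i)) * t $ 0 + (q ^ i * q ^ (n - i)) * t $ i"
      by (simp add: algebra_simps)
    also have "q ^ i * q ^ (n - i) = inverse q"
      using pow_split0[of i n q] that qn by simp
    finally show ?thesis .
  qed
  show ?thesis
  proof (rule eq_vecI)
    fix i assume "i < dim_vec (Uv q n y)"
    hence i: "i < n" by (simp add: Uv_def)
    show "Tv q n 0 (Dv q n n (Dv q n n (Tiv q n 0 (Div q n (Div q n y))))) $ i = Uv q n y $ i"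
    proof (cases "i = 0")
      case True
      have "Tv q n 0 z $ 0 = (- q) * z $ 0 + z $ 1" using n by (simp add: Tv_def)
      also have "\<dots> = (- q) * t $ 0 + (q * t $ 0 - inverse q * t $ 0 + inverse q * W $ 1)"
        using z0 zi[of 1] ti[of 1] n by simp
      also have "\<dots> = Uv q n y $ 0"
        using t0 W0 Wi[of 1] n q0 by (simp add: Uv_def field_simps power2_eq_square)
      finally show ?thesis using True by (simp add: z_def t_def W_def)
    next
      case False
      have "Tv q n 0 z $ i = z $ i" using False i by (simp add: Tv_def)
      also have "\<dots> = q ^ i * t $ 0 - inverse q * t $ 0 + inverse q * W $ i"
        using zi[of i] ti[of i] False i by simp
      also have "\<dots> = Uv q n y $ i"
      proof -
        have wi: "W $ i = y $ 0 * (1 - q ^ (i + 1)) + q * y $ i" using Wi[of i] False i by simp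
        show ?thesis unfolding t0 wi using i q0 by (simp add: Uv_def field_simps)
      qed
      finally show ?thesis by (simp add: z_def t_def W_def)
    qed
  qed (simp add: Tv_def Uv_def)
qed


definition Ugm :: "complex \<Rightarrow> nat \<Rightarrow> complex \<Rightarrow> complex mat" where
  "Ugm q n s = mat n n (\<lambda>(i, c). (if i = c then 1 else 0)
      + s * ((q ^ i - inverse q) * ((if c = 1 then 1 else 0) - (1 + q) * (if c = 0 then 1 else 0))))"

definition Ugv :: "complex \<Rightarrow> nat \<Rightarrow> complex \<Rightarrow> complex vec \<Rightarrow> complex vec" where
  "Ugv q n s y = vec n (\<lambda>i. y $ i + s * ((q ^ i - inverse q) * (y $ 1 - (1 + q) * y $ 0)))"

definition Umat :: "complex \<Rightarrow> nat \<Rightarrow> complex mat" where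
  "Umat q n = Ugm q n 1"

lemma Ugm_carrier[simp]: "Ugm q n s \<in> carrier_mat n n" by (simp add: Ugm_def)
lemma Umat_carrier[simp]: "Umat q n \<in> carrier_mat n n" by (simp add: Umat_def)
lemma Ugv_carrier[simp]: "Ugv q n s y \<in> carrier_vec n" by (simp add: Ugv_def)

lemma Ugm_act:
  assumes n: "n \<ge> 2" and y: "y \<in> carrier_vec n"
  shows "Ugm q n s *\<^sub>v y = Ugv q n s y"
proof (rule eq_vecI)
  fix i assume "i < dim_vec (Ugv q n s y)"
  hence i: "i < n" by (simp add: Ugv_def)
  let ?a = "s * (q ^ i - inverse q)"
  have "(Ugm q n s *\<^sub>v y) $ i = (\<Sum>c\<in>{0..<n}. ((if i = c then 1 else 0)
      + s * ((q ^ i - inverse q) * ((if c = 1 then 1 else 0) - (1 + q) * (if c = 0 then 1 else 0)))) * y $ c)"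
    using i y by (simp add: Ugm_def scalar_prod_def)
  also have "\<dots> = (\<Sum>c\<in>{0..<n}. (if c = i then y $ c else 0) + ?a * (if c = 1 then y $ c else 0)
      - ?a * (1 + q) * (if c = 0 then y $ c else 0))"
    by (intro sum.cong) (auto simp: algebra_simps)
  also have "\<dots> = (\<Sum>c\<in>{0..<n}. (if c = i then y $ c else 0)) + ?a * (\<Sum>c\<in>{0..<n}. (if c = 1 then y $ c else 0))
      - ?a * (1 + q) * (\<Sum>c\<in>{0..<n}. (if c = 0 then y $ c else 0))"
    by (simp only: sum.distrib sum_subtractf sum_distrib_left)
  also have "\<dots> = Ugv q n s y $ i" using i n by (simp add: Ugv_def algebra_simps)
  finally show "(Ugm q n s *\<^sub>v y) $ i = Ugv q n s y $ i" .
qed (simp add: Ugm_def Ugv_def)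

lemma Umat_act: "n \<ge> 2 \<Longrightarrow> y \<in> carrier_vec n \<Longrightarrow> Umat q n *\<^sub>v y = Uv q n y"
  unfolding Umat_def by (simp add: Ugm_act Ugv_def Uv_def)

lemma rho_single: "p < n \<Longrightarrow> rho d n [(Suc p, b)] = gmat d n (Suc p, b)"
  using gmat_carrier[of "Suc p" n d b] by (simp add: rho_Cons right_mult_one_mat)

lemma rho_u:
  assumes d: "d \<ge> 3" and k: "k \<ge> 1" and nd: "n = k * d - 1"
  shows "rho d n (u_word n) = Umat (zeta d) n"
proof -
  let ?q = "zeta d"
  have n2: "n \<ge> 2" using d k nd
    by (metis One_nat_def Suc_1 diff_Suc_1 diff_le_mono le_trans mult_le_mono numeral_3_eq_3 mult_1 nat_mult_le_cancel_disj not_less_eq_eq)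
  have kd: "n + 1 = k * d" using nd d k by (metis Suc_eq_plus1 Suc_pred' mult_pos_pos not_le not_less_eq_eq zero_less_one_class.zero_le_one le_trans numeral_le_one_iff semiring_norm(69) one_le_numeral nat_0_less_mult_iff less_one)
  have q1: "?q ^ (n + 1) = 1" unfolding kd using zeta_pow_d[of d] d
    by (metis mult.commute power_mult power_one zero_less_numeral less_le_trans)
  have q0: "?q \<noteq> 0" by (rule zeta_nz)
  let ?D = "delta' n" and ?I = "inv_word (delta' n)"
  have vD: "valid n ?D" by (rule valid_delta') simp
  have vI: "valid n ?I" using vD by simp
  have v1: "valid n [(1, b)]" for b using n2 by (simp add: valid_def)
  have R: "rho d n ?D *\<^sub>v x = Dv ?q n n x" if "x \<in> carrier_vec n" for x
    using rho_delta'[of n n x d] that n2 by simp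
  have RI: "rho d n ?I *\<^sub>v y = Div ?q n y" if y: "y \<in> carrier_vec n" for y
  proof -
    have "y = rho d n ?D *\<^sub>v Div ?q n y" using R[of "Div ?q n y"] Dv_Div[OF q1 y] by simp
    hence "rho d n ?I *\<^sub>v y = rho d n ?I *\<^sub>v (rho d n ?D *\<^sub>v Div ?q n y)" by simp
    also have "\<dots> = (rho d n ?I * rho d n ?D) *\<^sub>v Div ?q n y"
      by (rule assoc_mult_mat_vec[OF rho_carrier[OF vI] rho_carrier[OF vD] Div_carrier, symmetric])
    also have "\<dots> = Div ?q n y" using rho_inv_word[OF vD] by simp
    finally show ?thesis .
  qed
  have T1: "rho d n [(1, True)] *\<^sub>v x = Tv ?q n 0 x" if "x \<in> carrier_vec n" for x
    using rho_single[of 0 n d True] gmat_act[of 0 n x d] that n2 by simp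
  have T1i: "rho d n [(1, False)] *\<^sub>v x = Tiv ?q n 0 x" if "x \<in> carrier_vec n" for x
    using rho_single[of 0 n d False] gmat_act_inv[of 0 n x d] that n2 by simp
  show ?thesis
  proof (rule mat_eq_action[of _ n])
    fix y :: "complex vec" assume y: "y \<in> carrier_vec n"
    have c1: "Div ?q n (Div ?q n y) \<in> carrier_vec n" by simp
    have "rho d n (u_word n) *\<^sub>v y
        = rho d n [(1, True)] *\<^sub>v (rho d n ?D *\<^sub>v (rho d n ?D *\<^sub>v (rho d n [(1, False)] *\<^sub>v
           (rho d n ?I *\<^sub>v (rho d n ?I *\<^sub>v y)))))"
    proof -
      have uw: "u_word n = [(1, True)] @ (?D @ (?D @ ([(1, False)] @ (?I @ ?I))))" by (simp add: u_word_def)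
      show ?thesis unfolding uw
        by (simp only: rho_act_append vD vI v1 valid_append rho_act_carrier y simp_thms)
    qed
    also have "\<dots> = Tv ?q n 0 (Dv ?q n n (Dv ?q n n (Tiv ?q n 0 (Div ?q n (Div ?q n y)))))"
      by (simp only: RI Div_carrier y T1i Tiv_carrier R Dv_carrier T1)
    also have "\<dots> = Uv ?q n y" by (rule final_comp[OF q0 q1 n2 y])
    also have "\<dots> = Umat ?q n *\<^sub>v y" using Umat_act[OF n2 y] by simp
    finally show "rho d n (u_word n) *\<^sub>v y = Umat ?q n *\<^sub>v y" .
  next
    have "valid n (u_word n)" unfolding u_word_def using vD vI v1 by (simp only: valid_append simp_thms)
    thus "rho d n (u_word n) \<in> carrier_mat n n" by (rule rho_carrier)
  qed simp
qed


lemma Ugv_comp: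
  assumes q0: "q \<noteq> 0" and n: "n \<ge> 2" and y: "y \<in> carrier_vec n"
  shows "Ugv q n s (Ugv q n t y) = Ugv q n (s + t) y"
proof (rule eq_vecI)
  fix i assume "i < dim_vec (Ugv q n (s + t) y)"
  hence i: "i < n" by (simp add: Ugv_def)
  let ?b = "y $ 1 - (1 + q) * y $ 0"
  have e1: "Ugv q n t y $ 1 = y $ 1 + t * ((q - inverse q) * ?b)" using n by (simp add: Ugv_def)
  have e0: "Ugv q n t y $ 0 = y $ 0 + t * ((1 - inverse q) * ?b)" using n by (simp add: Ugv_def)
  have bb: "Ugv q n t y $ 1 - (1 + q) * Ugv q n t y $ 0 = ?b"
    unfolding e1 e0 using q0 by (simp add: field_simps)
  have "Ugv q n s (Ugv q n t y) $ i = Ugv q n t y $ i + s * ((q ^ i - inverse q) * (Ugv q n t y $ 1 - (1 + q) * Ugv q n t y $ 0))"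
    using i by (simp only: Ugv_def[of q n s] index_vec)
  also have "\<dots> = Ugv q n t y $ i + s * ((q ^ i - inverse q) * ?b)" by (simp only: bb)
  also have "\<dots> = Ugv q n (s + t) y $ i" using i by (simp add: Ugv_def algebra_simps)
  finally show "Ugv q n s (Ugv q n t y) $ i = Ugv q n (s + t) y $ i" .
qed (simp add: Ugv_def)

lemma Ugv_0: "y \<in> carrier_vec n \<Longrightarrow> Ugv q n 0 y = y"
  by (intro eq_vecI) (auto simp: Ugv_def)

lemma Ugm_mult:
  assumes q0: "q \<noteq> 0" and n: "n \<ge> 2"
  shows "Ugm q n s * Ugm q n t = Ugm q n (s + t)"
proof (rule mat_eq_action[of _ n])
  fix y :: "complex vec" assume y: "y \<in> carrier_vec n"
  have "(Ugm q n s * Ugm q n t) *\<^sub>v y = Ugm q n s *\<^sub>v (Ugm q n t *\<^sub>v y)"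
    by (rule assoc_mult_mat_vec[OF Ugm_carrier Ugm_carrier y])
  also have "\<dots> = Ugv q n (s + t) y" using y n q0 by (simp add: Ugm_act Ugv_comp)
  finally show "(Ugm q n s * Ugm q n t) *\<^sub>v y = Ugm q n (s + t) *\<^sub>v y" using Ugm_act[OF n y] by simp
qed (auto intro: mult_carrier_mat[of _ n n _ n])

lemma Ugm_0: "Ugm q n 0 = 1\<^sub>m n"
  by (intro eq_matI) (auto simp: Ugm_def)

lemma zero_mat_act: "y \<in> carrier_vec n \<Longrightarrow> (0\<^sub>m n n :: complex mat) *\<^sub>v y = 0\<^sub>v n"
  by (intro eq_vecI) (auto simp: scalar_prod_def)

lemma U_nilp:
  assumes q0: "q \<noteq> 0" and n: "n \<ge> 2"
  shows "(Umat q n - 1\<^sub>m n) ^\<^sub>m 2 = 0\<^sub>m n n"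
proof -
  let ?N = "Umat q n - 1\<^sub>m n"
  have N: "?N \<in> carrier_mat n n" by (rule minus_carrier_mat) simp
  have Nact: "?N *\<^sub>v y = Ugv q n 1 y - y" if "y \<in> carrier_vec n" for y
  proof -
    have "?N *\<^sub>v y = Umat q n *\<^sub>v y - 1\<^sub>m n *\<^sub>v y"
      by (rule minus_mult_distrib_mat_vec[OF Umat_carrier one_carrier_mat that])
    thus ?thesis using that n by (simp add: Umat_def Ugm_act)
  qed
  have "?N * ?N = 0\<^sub>m n n"
  proof (rule mat_eq_action[of _ n])
    fix y :: "complex vec" assume y: "y \<in> carrier_vec n"
    have z: "Ugv q n 1 y - y \<in> carrier_vec n" using y by simp
    have "(?N * ?N) *\<^sub>v y = ?N *\<^sub>v (?N *\<^sub>v y)" by (rule assoc_mult_mat_vec[OF N N y])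
    also have "\<dots> = Ugv q n 1 (Ugv q n 1 y - y) - (Ugv q n 1 y - y)" using y z by (simp add: Nact)
    also have "\<dots> = 0\<^sub>v n"
    proof (rule eq_vecI)
      fix i assume "i < dim_vec (0\<^sub>v n :: complex vec)"
      hence i: "i < n" by simp
      let ?b = "y $ 1 - (1 + q) * y $ 0"
      have e1: "(Ugv q n 1 y - y) $ 1 = (q - inverse q) * ?b" using n y by (simp add: Ugv_def)
      have e0: "(Ugv q n 1 y - y) $ 0 = (1 - inverse q) * ?b" using n y by (simp add: Ugv_def)
      have bb: "(Ugv q n 1 y - y) $ 1 - (1 + q) * (Ugv q n 1 y - y) $ 0 = 0"
        unfolding e1 e0 using q0 by (simp add: field_simps)
      let ?z = "Ugv q n 1 y - y"
      have "(Ugv q n 1 ?z - ?z) $ i = Ugv q n 1 ?z $ i - ?z $ i"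
        by (rule index_minus_vec(1)) (use z i y in \<open>simp add: carrier_vecD\<close>)
      also have "Ugv q n 1 ?z $ i = ?z $ i + 1 * ((q ^ i - inverse q) * (?z $ 1 - (1 + q) * ?z $ 0))"
        using i by (simp only: Ugv_def[of q n 1 ?z] index_vec)
      also have "\<dots> = ?z $ i" by (simp only: bb mult_zero_right add_0_right)
      finally show "(Ugv q n 1 ?z - ?z) $ i = 0\<^sub>v n $ i" using i by (simp only: diff_self index_zero_vec)
    qed (use y in \<open>simp add: Ugv_def\<close>)
    finally show "(?N * ?N) *\<^sub>v y = 0\<^sub>m n n *\<^sub>v y" using y by (simp only: zero_mat_act)
  qed (auto intro: mult_carrier_mat[of _ n n _ n])
  thus ?thesis using N by (simp add: numeral_2_eq_2 left_mult_one_mat)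
qed


section \<open>hermitian form\<close>

lemma null_vec_idx: "i < n \<Longrightarrow> null_vec d n $ i = (zeta d ^ (i + 1) - 1) / (zeta d - 1)"
  by (simp add: null_vec_def)

lemma null_vec_carrier[simp]: "null_vec d n \<in> carrier_vec n" by (simp add: null_vec_def)
lemma null_vec_dim[simp]: "dim_vec (null_vec d n) = n" by (simp add: null_vec_def)

lemma h_gram_alt: "h_gram d j k = (if j + 1 = k then - (zeta d + 1) else if j = k then (zeta d + 1) ^ 2 / zeta d
   else if j = k + 1 then - (1 + inverse (zeta d)) else 0)"
  by (auto simp: h_gram_def Let_def)

lemma radical1:
  assumes d: "d \<ge> 3" and q1: "zeta d ^ (n + 1) = 1" and k: "k < n"
  shows "(\<Sum>j<n. null_vec d n $ j * h_gram d j k) = 0"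
proof -
  let ?q = "zeta d"
  have q0: "?q \<noteq> 0" by (rule zeta_nz)
  have qne: "?q \<noteq> 1" using zeta_ne1[OF d] by simp
  have qne': "?q - 1 \<noteq> 0" using qne by simp
  let ?E = "- (?q + 1)" and ?D = "(?q + 1) ^ 2 / ?q" and ?F = "- (1 + inverse ?q)"
  have "(\<Sum>j<n. null_vec d n $ j * h_gram d j k)
      = (\<Sum>j<n. (if j + 1 = k then ?E else if j = k then ?D else if j = k + 1 then ?F else 0) * null_vec d n $ j)"
    by (intro sum.cong) (simp_all add: h_gram_alt mult.commute)
  also have "\<dots> = (if 1 \<le> k then ?E * null_vec d n $ (k - 1) else 0) + ?D * null_vec d n $ k
      + (if k + 1 < n then ?F * null_vec d n $ (k + 1) else 0)"
    by (rule sum3[OF k, where x = "\<lambda>j. null_vec d n $ j"])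
  also have "(if 1 \<le> k then ?E * null_vec d n $ (k - 1) else 0) = ?E * ((?q ^ k - 1) / (?q - 1))"
    using k by (cases k) (simp_all add: null_vec_idx)
  also have "?D * null_vec d n $ k = ?D * ((?q ^ (k + 1) - 1) / (?q - 1))"
    using k by (simp add: null_vec_idx)
  also have "(if k + 1 < n then ?F * null_vec d n $ (k + 1) else 0) = ?F * ((?q ^ (k + 2) - 1) / (?q - 1))"
  proof (cases "k + 1 < n")
    case True thus ?thesis by (simp add: null_vec_idx)
  next
    case False hence "k + 2 = n + 1" using k by simp
    thus ?thesis using False q1 by simp
  qed
  also have "?E * ((?q ^ k - 1) / (?q - 1)) + ?D * ((?q ^ (k + 1) - 1) / (?q - 1)) + ?F * ((?q ^ (k + 2) - 1) / (?q - 1))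
      = (?E * (?q ^ k - 1) + ?D * (?q ^ (k + 1) - 1) + ?F * (?q ^ (k + 2) - 1)) / (?q - 1)"
    by (simp add: add_divide_distrib)
  also have "?E * (?q ^ k - 1) + ?D * (?q ^ (k + 1) - 1) + ?F * (?q ^ (k + 2) - 1) = 0"
  proof -
    have e: "?q ^ (k + 1) = ?q * ?q ^ k" "?q ^ (k + 2) = ?q * ?q * ?q ^ k" by (simp_all add: power_add power2_eq_square)
    show ?thesis unfolding e using q0 by (simp add: field_simps power2_eq_square)
  qed
  finally show ?thesis by simp
qed

lemma h_herm: "cnj (h_gram d j k) = h_gram d k j"
proof -
  have q0: "zeta d \<noteq> 0" by (rule zeta_nz)
  have c: "cnj (zeta d) = inverse (zeta d)" by (rule zeta_cnj)
  show ?thesis unfolding h_gram_def Let_def using q0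
    by (auto simp: c field_simps power2_eq_square)
qed

lemma radical2:
  assumes d: "d \<ge> 3" and q1: "zeta d ^ (n + 1) = 1" and j: "j < n"
  shows "(\<Sum>k<n. h_gram d j k * cnj (null_vec d n $ k)) = 0"
proof -
  have "(\<Sum>k<n. h_gram d j k * cnj (null_vec d n $ k)) = cnj (\<Sum>k<n. null_vec d n $ k * h_gram d k j)"
    by (simp add: h_herm mult.commute)
  also have "\<dots> = 0" using radical1[OF d q1 j] by simp
  finally show ?thesis .
qed

lemma hform_shift:
  assumes d: "d \<ge> 3" and q1: "zeta d ^ (n + 1) = 1"
    and x: "x \<in> carrier_vec n" and y: "y \<in> carrier_vec n"
  shows "hform d n (y + a \<cdot>\<^sub>v null_vec d n) (x + b \<cdot>\<^sub>v null_vec d n) = hform d n y x"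
proof -
  let ?v = "null_vec d n" and ?h = "h_gram d"
  have "hform d n (y + a \<cdot>\<^sub>v ?v) (x + b \<cdot>\<^sub>v ?v)
      = (\<Sum>j<n. \<Sum>k<n. (y $ j + a * ?v $ j) * ?h j k * cnj (x $ k + b * ?v $ k))"
  proof -
    have ix: "(y + a \<cdot>\<^sub>v ?v) $ j = y $ j + a * ?v $ j" "(x + b \<cdot>\<^sub>v ?v) $ j = x $ j + b * ?v $ j" if "j < n" for j
      using x y that by simp_all
    show ?thesis unfolding hform_def by (intro sum.cong refl) (simp only: ix lessThan_iff)
  qed
  also have "\<dots> = (\<Sum>j<n. \<Sum>k<n. y $ j * ?h j k * cnj (x $ k)
       + (y $ j * cnj b) * (?h j k * cnj (?v $ k))
       + (a * cnj (x $ k + b * ?v $ k)) * (?v $ j * ?h j k))"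
    by (intro sum.cong refl) (simp add: algebra_simps)
  also have "\<dots> = (\<Sum>j<n. \<Sum>k<n. y $ j * ?h j k * cnj (x $ k))
       + (\<Sum>j<n. \<Sum>k<n. (y $ j * cnj b) * (?h j k * cnj (?v $ k)))
       + (\<Sum>j<n. \<Sum>k<n. (a * cnj (x $ k + b * ?v $ k)) * (?v $ j * ?h j k))"
    by (simp only: sum.distrib)
  also have "(\<Sum>j<n. \<Sum>k<n. (y $ j * cnj b) * (?h j k * cnj (?v $ k)))
      = (\<Sum>j<n. (y $ j * cnj b) * (\<Sum>k<n. ?h j k * cnj (?v $ k)))"
    by (simp only: sum_distrib_left)
  also have "(\<Sum>j<n. \<Sum>k<n. (a * cnj (x $ k + b * ?v $ k)) * (?v $ j * ?h j k))
      = (\<Sum>k<n. \<Sum>j<n. (a * cnj (x $ k + b * ?v $ k)) * (?v $ j * ?h j k))"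
    by (rule sum.swap)
  also have "\<dots> = (\<Sum>k<n. (a * cnj (x $ k + b * ?v $ k)) * (\<Sum>j<n. ?v $ j * ?h j k))"
    by (simp only: sum_distrib_left)
  also have "(\<Sum>j<n. (y $ j * cnj b) * (\<Sum>k<n. ?h j k * cnj (?v $ k))) = 0"
    using radical2[OF d q1] by simp
  also have "(\<Sum>k<n. (a * cnj (x $ k + b * ?v $ k)) * (\<Sum>j<n. ?v $ j * ?h j k)) = 0"
    using radical1[OF d q1] by simp
  finally show ?thesis unfolding hform_def by simp
qed


lemma ring_if: "a \<in> cyc_ring d \<Longrightarrow> b \<in> cyc_ring d \<Longrightarrow> (if P then a else b) \<in> cyc_ring d"
  by simp

lemma Ugm_A_mat:
  assumes d: "d \<ge> 3" and s: "s \<in> cyc_ring d"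
  shows "A_mat d n (Ugm (zeta d) n s)"
  unfolding A_mat_def Ugm_def using d s
  by (auto intro!: ring_add ring_mult ring_diff ring_pow ring_zeta ring_inv_zeta ring_0 ring_1 ring_if ring_neg)

lemma U_shift:
  assumes d: "d \<ge> 3" and n: "n \<ge> 2" and y: "y \<in> carrier_vec n"
  shows "Umat (zeta d) n *\<^sub>v y = y + ((1 - inverse (zeta d)) * (y $ 1 - (1 + zeta d) * y $ 0)) \<cdot>\<^sub>v null_vec d n"
proof -
  let ?q = "zeta d"
  have q0: "?q \<noteq> 0" by (rule zeta_nz)
  have qne: "?q - 1 \<noteq> 0" using zeta_ne1[OF d] by simp
  have "Umat ?q n *\<^sub>v y = Uv ?q n y" by (rule Umat_act[OF n y])
  also have "\<dots> = y + ((1 - inverse ?q) * (y $ 1 - (1 + ?q) * y $ 0)) \<cdot>\<^sub>v null_vec d n"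
  proof (rule eq_vecI)
    fix i assume "i < dim_vec (y + ((1 - inverse ?q) * (y $ 1 - (1 + ?q) * y $ 0)) \<cdot>\<^sub>v null_vec d n)"
    hence i: "i < n" by simp
    have e: "(?q ^ i - inverse ?q) = (1 - inverse ?q) * ((?q ^ (i + 1) - 1) / (?q - 1))"
      using q0 qne by (simp add: field_simps)
    show "Uv ?q n y $ i = (y + ((1 - inverse ?q) * (y $ 1 - (1 + ?q) * y $ 0)) \<cdot>\<^sub>v null_vec d n) $ i"
      using i y by (simp add: Uv_def null_vec_idx e)
  qed (use y in \<open>simp add: Uv_def\<close>)
  finally show ?thesis .
qed

theorem main:
  fixes d k n :: nat
  assumes "d \<ge> 3" and "k \<ge> 1" and "n = k * d - 1"
  shows "rho d n (u_word n) \<in> unitary_grp d n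
       \<and> unipotent n (rho d n (u_word n))
       \<and> rho d n (u_word n) \<noteq> 1\<^sub>m n
       \<and> rho d n (u_word n) \<in> U0 d n"
proof -
  note d = assms(1)
  let ?q = "zeta d"
  have n2: "n \<ge> 2" using assms
    by (metis One_nat_def Suc_1 diff_Suc_1 diff_le_mono le_trans mult_le_mono numeral_3_eq_3 mult_1 nat_mult_le_cancel_disj not_less_eq_eq)
  have kd: "n + 1 = k * d" using assms by (metis Suc_eq_plus1 Suc_pred' mult_pos_pos not_le not_less_eq_eq zero_less_one_class.zero_le_one le_trans numeral_le_one_iff semiring_norm(69) one_le_numeral nat_0_less_mult_iff less_one)
  have q1: "?q ^ (n + 1) = 1" unfolding kd using zeta_pow_d[of d] d
    by (metis mult.commute power_mult power_one zero_less_numeral less_le_trans)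
  have q0: "?q \<noteq> 0" by (rule zeta_nz)
  have qne: "?q \<noteq> 1" using zeta_ne1[OF d] by simp
  have U: "rho d n (u_word n) = Umat ?q n" by (rule rho_u[OF assms])
  have Uc: "Umat ?q n \<in> carrier_mat n n" by simp
  have AU: "A_mat d n (Umat ?q n)" unfolding Umat_def by (rule Ugm_A_mat[OF d ring_1])
  have AUi: "A_mat d n (Ugm ?q n (-1))" by (rule Ugm_A_mat[OF d ring_neg1])
  have inv1: "Umat ?q n * Ugm ?q n (-1) = 1\<^sub>m n" unfolding Umat_def using Ugm_mult[OF q0 n2, of 1 "-1"] Ugm_0 by simp
  have inv2: "Ugm ?q n (-1) * Umat ?q n = 1\<^sub>m n" unfolding Umat_def using Ugm_mult[OF q0 n2, of "-1" 1] Ugm_0 by simp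
  have coef: "(1 - inverse ?q) * (x $ 1 - (1 + ?q) * x $ 0) \<in> cyc_ring d" if "A_vec d n x" for x
  proof -
    have "x $ 1 \<in> cyc_ring d" "x $ 0 \<in> cyc_ring d" using that n2 unfolding A_vec_def by auto
    thus ?thesis using d by (auto intro!: ring_mult ring_diff ring_add ring_1 ring_inv_zeta ring_zeta)
  qed
  have pres: "hform d n (Umat ?q n *\<^sub>v x) (Umat ?q n *\<^sub>v y) = hform d n x y"
    if "A_vec d n x" "A_vec d n y" for x y
  proof -
    have xc: "x \<in> carrier_vec n" "y \<in> carrier_vec n" using that unfolding A_vec_def by auto
    show ?thesis unfolding U_shift[OF d n2 xc(1)] U_shift[OF d n2 xc(2)]
      by (rule hform_shift[OF d q1 xc(2) xc(1)])
  qed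
  have unit: "Umat ?q n \<in> unitary_grp d n"
    unfolding unitary_grp_def using AU AUi inv1 inv2 pres by blast
  have unip: "unipotent n (Umat ?q n)"
    unfolding unipotent_def using U_nilp[OF q0 n2] by blast
  have ne: "Umat ?q n \<noteq> 1\<^sub>m n"
  proof
    assume "Umat ?q n = 1\<^sub>m n"
    hence "Umat ?q n $$ (0, 1) = 1\<^sub>m n $$ (0, 1)" by simp
    hence "1 - inverse ?q = 0" using n2 by (simp add: Umat_def Ugm_def)
    hence "?q = 1" using q0 by (simp add: field_simps)
    thus False using qne by simp
  qed
  have fixv: "Umat ?q n *\<^sub>v null_vec d n = null_vec d n"
  proof -
    have b: "null_vec d n $ 1 - (1 + ?q) * null_vec d n $ 0 = 0"
      using n2 qne by (simp add: null_vec_idx field_simps power2_eq_square)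
    show ?thesis unfolding U_shift[OF d n2 null_vec_carrier] b by (intro eq_vecI) auto
  qed
  have U0: "Umat ?q n \<in> U0 d n"
    unfolding U0_def
  proof (intro CollectI conjI allI impI unit fixv)
    fix x assume x: "A_vec d n x"
    have xc: "x \<in> carrier_vec n" using x unfolding A_vec_def by auto
    have "Umat ?q n *\<^sub>v x - x = ((1 - inverse ?q) * (x $ 1 - (1 + ?q) * x $ 0)) \<cdot>\<^sub>v null_vec d n"
      unfolding U_shift[OF d n2 xc] using xc by (intro eq_vecI) auto
    thus "\<exists>a\<in>cyc_ring d. Umat ?q n *\<^sub>v x - x = a \<cdot>\<^sub>v null_vec d n" using coef[OF x] by blast
  qed
  show ?thesis unfolding U using unit unip ne U0 by blast
qed

theorem proposition4p6:
  fixes d k n :: nat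
  assumes "d \<ge> 3" and "k \<ge> 1" and "n = k * d - 1"
  shows "rho d n (u_word n) \<in> unitary_grp d n
       \<and> unipotent n (rho d n (u_word n))
       \<and> rho d n (u_word n) \<noteq> 1\<^sub>m n
       \<and> rho d n (u_word n) \<in> U0 d n"
  using main[OF assms] .

end
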